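(* Let $\mathfrak{g}$ be the following computad. - Objects: $\mathsf{0},\mathsf{1},\mathsf{2}$. - Arrows: $d\colon\mathsf{0}\to\mathsf{1}$, $d^0,d^1\colon\mathsf{1}\to\mathsf{2}$, and $s^0\colon\mathsf{2}\to\mathsf{1}$. - $2$-cells: $n_0\colon s^0 d^0\Rightarrow \mathrm{id}_{\mathsf{1}}$, $n_1\colon \mathrm{id}_{\mathsf{1}}\Rightarrow s^0 d^1$, and $\vartheta\colon d^1 d\Rightarrow d^0 d$. Then the locally thin $2$-category $\overline{\mathcal{M}_2}\mathcal{F}_2(\mathfrak{g})$ is not a free $2$-category. In particular, $\mathcal{F}_2(\mathfrak{g})$ and $\overline{\mathcal{L}_2}\mathcal{F}_2(\mathfrak{g})$ are not locally thin.
   Context: A computad consists of a small graph $G$ and a set of $2$-cells $\alpha$, each given by a pair of parallel morphisms $\alpha\colon f\Rightarrow g$ in the free category on $G$. $\mathcal{F}_2(\mathfrak{g})$ is the $2$-category freely generated by the computad $\mathfrak{g}$. Its underlying category is the free category on the graph. Its $2$-cells are freely generated by the given $2$-cells under vertical and horizontal composition and whiskering, subject only to the $2$-category axioms. A $2$-category is free if it is isomorphic to $\mathcal{F}_2(\mathfrak{h})$ for some computad $\mathfrak{h}$. $\overline{\mathcal{L}_2}$ is the left adjoint to the inclusion of locally groupoidal $2$-categories (all $2$-cells invertible) into $2$-categories; it freely inverts $2$-cells. $\overline{\mathcal{M}_2}$ is the left adjoint to the inclusion of locally thin $2$-categories (each hom-category has at most one $2$-cell between any two $1$-cells) into $2$-categories;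 it identifies parallel $2$-cells. *)

theory Defs
  imports Main
begin

text \<open>Underlying 1-category: objects, arrows, domain, codomain, identities,
  composition (cmp g f = g after f, defined when cod f = dom g).\<close>
record ('o,'a) cat1 =
  ob  :: "'o set"
  ar  :: "'a set"
  dom :: "'a \<Rightarrow> 'o"
  cod :: "'a \<Rightarrow> 'o"
  idn :: "'o \<Rightarrow> 'a"
  cmp :: "'a \<Rightarrow> 'a \<Rightarrow> 'a"

text \<open>A 2-category: additionally 2-cells with source/target 1-cells,
  identity 2-cells, vertical composition (vc b a = b after a, when t2 a = s2 b)
  and horizontal composition (hc b a, for a : f => g : X -> Y and
  b : h => k : Y -> Z, giving h f => k g).\<close>
record ('o,'a,'c) cat2 = "('o,'a) cat1" +
  cl  :: "'c set"
  s2  :: "'c \<Rightarrow> 'a"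
  t2  :: "'c \<Rightarrow> 'a"
  id2 :: "'a \<Rightarrow> 'c"
  vc  :: "'c \<Rightarrow> 'c \<Rightarrow> 'c"
  hc  :: "'c \<Rightarrow> 'c \<Rightarrow> 'c"

definition loc_thin :: "('o,'a,'c,'m) cat2_scheme \<Rightarrow> bool" where
  "loc_thin C \<longleftrightarrow> (\<forall>a\<in>cl C. \<forall>b\<in>cl C. s2 C a = s2 C b \<and> t2 C a = t2 C b \<longrightarrow> a = b)"

definition iso2 :: "('o,'a,'c) cat2 \<Rightarrow> ('p,'b,'d) cat2 \<Rightarrow> bool" where
  "iso2 C D \<longleftrightarrow> (\<exists>F0 F1 F2.
     bij_betw F0 (ob C) (ob D) \<and> bij_betw F1 (ar C) (ar D) \<and> bij_betw F2 (cl C) (cl D) \<and>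
     (\<forall>f\<in>ar C. dom D (F1 f) = F0 (dom C f) \<and> cod D (F1 f) = F0 (cod C f)) \<and>
     (\<forall>x\<in>ob C. F1 (idn C x) = idn D (F0 x)) \<and>
     (\<forall>f\<in>ar C. \<forall>g\<in>ar C. cod C f = dom C g \<longrightarrow> F1 (cmp C g f) = cmp D (F1 g) (F1 f)) \<and>
     (\<forall>a\<in>cl C. s2 D (F2 a) = F1 (s2 C a) \<and> t2 D (F2 a) = F1 (t2 C a)) \<and>
     (\<forall>f\<in>ar C. F2 (id2 C f) = id2 D (F1 f)) \<and>
     (\<forall>a\<in>cl C. \<forall>b\<in>cl C. t2 C a = s2 C b \<longrightarrow> F2 (vc C b a) = vc D (F2 b) (F2 a)) \<and>
     (\<forall>a\<in>cl C. \<forall>b\<in>cl C. cod C (s2 C a) = dom C (s2 C b) \<longrightarrow>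
          F2 (hc C b a) = hc D (F2 b) (F2 a)))"

text \<open>Formal 2-cell expressions over a base 1-category with 1-cells of type 'a
  and generating 2-cells of type 'x; Iv x is a formal inverse of x.\<close>
datatype ('a,'x) tm = At 'x | Iv 'x | Idt 'a | Vt "('a,'x) tm" "('a,'x) tm"
  | Ht "('a,'x) tm" "('a,'x) tm"

record ('o,'a,'x) pres =
  base :: "('o,'a) cat1"
  gens :: "'x set"
  gsrc :: "'x \<Rightarrow> 'a"
  gtgt :: "'x \<Rightarrow> 'a"
  ginv :: bool
  grel :: "(('a,'x) tm \<times> ('a,'x) tm) set"

inductive wt :: "('o,'a,'x) pres \<Rightarrow> ('a,'x) tm \<Rightarrow> 'a \<Rightarrow> 'a \<Rightarrow> bool" for P where
  wt_At: "x \<in> gens P \<Longrightarrow> wt P (At x) (gsrc P x) (gtgt P x)"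
| wt_Iv: "ginv P \<Longrightarrow> x \<in> gens P \<Longrightarrow> wt P (Iv x) (gtgt P x) (gsrc P x)"
| wt_Id: "f \<in> ar (base P) \<Longrightarrow> wt P (Idt f) f f"
| wt_V: "wt P a f g \<Longrightarrow> wt P b g h \<Longrightarrow> wt P (Vt b a) f h"
| wt_H: "wt P a f g \<Longrightarrow> wt P b h k \<Longrightarrow> cod (base P) f = dom (base P) h \<Longrightarrow>
           wt P (Ht b a) (cmp (base P) h f) (cmp (base P) k g)"

inductive eqv :: "('o,'a,'x) pres \<Rightarrow> ('a,'x) tm \<Rightarrow> ('a,'x) tm \<Rightarrow> bool" for P where
  e_refl: "wt P a f g \<Longrightarrow> eqv P a a"
| e_sym: "eqv P a b \<Longrightarrow> eqv P b a"
| e_trans: "eqv P a b \<Longrightarrow> eqv P b c \<Longrightarrow> eqv P a c"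
| e_congV: "eqv P a a' \<Longrightarrow> eqv P b b' \<Longrightarrow> wt P (Vt b a) f g \<Longrightarrow> eqv P (Vt b a) (Vt b' a')"
| e_congH: "eqv P a a' \<Longrightarrow> eqv P b b' \<Longrightarrow> wt P (Ht b a) f g \<Longrightarrow> eqv P (Ht b a) (Ht b' a')"
| e_rel: "(a, b) \<in> grel P \<Longrightarrow> wt P a f g \<Longrightarrow> wt P b f g \<Longrightarrow> eqv P a b"
| e_vassoc: "wt P (Vt c (Vt b a)) f g \<Longrightarrow> eqv P (Vt c (Vt b a)) (Vt (Vt c b) a)"
| e_vidl: "wt P a f g \<Longrightarrow> eqv P (Vt (Idt g) a) a"
| e_vidr: "wt P a f g \<Longrightarrow> eqv P (Vt a (Idt f)) a"
| e_hassoc: "wt P (Ht c (Ht b a)) f g \<Longrightarrow> eqv P (Ht c (Ht b a)) (Ht (Ht c b) a)"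
| e_hidl: "wt P a f g \<Longrightarrow> eqv P (Ht (Idt (idn (base P) (cod (base P) f))) a) a"
| e_hidr: "wt P a f g \<Longrightarrow> eqv P (Ht a (Idt (idn (base P) (dom (base P) f)))) a"
| e_hidid: "wt P (Ht (Idt g) (Idt f)) h k \<Longrightarrow> eqv P (Ht (Idt g) (Idt f)) (Idt (cmp (base P) g f))"
| e_interchange: "wt P (Ht (Vt d c) (Vt b a)) f g \<Longrightarrow>
     eqv P (Ht (Vt d c) (Vt b a)) (Vt (Ht d b) (Ht c a))"
| e_invl: "ginv P \<Longrightarrow> x \<in> gens P \<Longrightarrow> eqv P (Vt (Iv x) (At x)) (Idt (gsrc P x))"
| e_invr: "ginv P \<Longrightarrow> x \<in> gens P \<Longrightarrow> eqv P (Vt (At x) (Iv x)) (Idt (gtgt P x))"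

definition cls :: "('o,'a,'x) pres \<Rightarrow> ('a,'x) tm \<Rightarrow> ('a,'x) tm set" where
  "cls P a = {b. eqv P a b}"

definition gen2 :: "('o,'a,'x) pres \<Rightarrow> ('o,'a,('a,'x) tm set) cat2" where
  "gen2 P = \<lparr> ob = ob (base P), ar = ar (base P), dom = dom (base P), cod = cod (base P),
     idn = idn (base P), cmp = cmp (base P),
     cl = {cls P a | a f g. wt P a f g},
     s2 = (\<lambda>A. SOME f. \<exists>a\<in>A. \<exists>g. wt P a f g),
     t2 = (\<lambda>A. SOME g. \<exists>a\<in>A. \<exists>f. wt P a f g),
     id2 = (\<lambda>f. cls P (Idt f)),
     vc = (\<lambda>B A. cls P (Vt (SOME b. b \<in> B) (SOME a. a \<in> A))),
     hc = (\<lambda>B A. cls P (Ht (SOME b. b \<in> B) (SOME a. a \<in> A))) \<rparr>"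

text \<open>A morphism of the free category is a pair (x, es): a start vertex and a path
  of edges listed in the order of traversal (so s0 d0 is (1, [d0, s0])).\<close>
record ('v,'e,'t) computad =
  cv   :: "'v set"
  ce   :: "'e set"
  esrc :: "'e \<Rightarrow> 'v"
  etgt :: "'e \<Rightarrow> 'v"
  ct   :: "'t set"
  csrc :: "'t \<Rightarrow> 'v \<times> 'e list"
  ctgt :: "'t \<Rightarrow> 'v \<times> 'e list"

fun chain :: "('v,'e,'t) computad \<Rightarrow> 'v \<Rightarrow> 'e list \<Rightarrow> bool" where
  "chain h x [] = True"
| "chain h x (e # es) = (e \<in> ce h \<and> esrc h e = x \<and> chain h (etgt h e) es)"

fun pend :: "('v,'e,'t) computad \<Rightarrow> 'v \<Rightarrow> 'e list \<Rightarrow> 'v" where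
  "pend h x [] = x"
| "pend h x (e # es) = pend h (etgt h e) es"

definition pathcat :: "('v,'e,'t) computad \<Rightarrow> ('v, 'v \<times> 'e list) cat1" where
  "pathcat h = \<lparr> ob = cv h, ar = {(x, es). x \<in> cv h \<and> chain h x es},
     dom = fst, cod = (\<lambda>(x, es). pend h x es), idn = (\<lambda>x. (x, [])),
     cmp = (\<lambda>(y, gs) (x, fs). (x, fs @ gs)) \<rparr>"

definition is_computad :: "('v,'e,'t) computad \<Rightarrow> bool" where
  "is_computad h \<longleftrightarrow> (\<forall>e\<in>ce h. esrc h e \<in> cv h \<and> etgt h e \<in> cv h) \<and>
     (\<forall>t\<in>ct h. csrc h t \<in> ar (pathcat h) \<and> ctgt h t \<in> ar (pathcat h) \<and>
        dom (pathcat h) (csrc h t) = dom (pathcat h) (ctgt h t) \<and>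
        cod (pathcat h) (csrc h t) = cod (pathcat h) (ctgt h t))"

definition F2 :: "('v,'e,'t) computad \<Rightarrow> ('v, 'v \<times> 'e list, ('v \<times> 'e list, 't) tm set) cat2" where
  "F2 h = gen2 \<lparr> base = pathcat h, gens = ct h, gsrc = csrc h, gtgt = ctgt h,
                 ginv = False, grel = {} \<rparr>"

definition M2 :: "('o,'a,'c) cat2 \<Rightarrow> ('o,'a,'a \<times> 'a) cat2" where
  "M2 C = \<lparr> ob = ob C, ar = ar C, dom = dom C, cod = cod C, idn = idn C, cmp = cmp C,
     cl = {(s2 C c, t2 C c) | c. c \<in> cl C},
     s2 = fst, t2 = snd, id2 = (\<lambda>f. (f, f)),
     vc = (\<lambda>B A. (fst A, snd B)),
     hc = (\<lambda>B A. (cmp C (fst B) (fst A), cmp C (snd B) (snd A))) \<rparr>"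

text \<open>L_2 C: freely adjoin inverses to all 2-cells of C, keeping the
  compositions of C.\<close>
definition L2 :: "('o,'a,'c) cat2 \<Rightarrow> ('o,'a,('a,'c) tm set) cat2" where
  "L2 C = gen2 \<lparr> base = cat1.truncate C, gens = cl C, gsrc = s2 C, gtgt = t2 C, ginv = True,
     grel = {(Vt (At b) (At a), At (vc C b a)) | a b. a \<in> cl C \<and> b \<in> cl C \<and> t2 C a = s2 C b}
          \<union> {(Ht (At b) (At a), At (hc C b a)) | a b. a \<in> cl C \<and> b \<in> cl C \<and>
                 cod C (s2 C a) = dom C (s2 C b)}
          \<union> {(At (id2 C f), Idt f) | f. f \<in> ar C} \<rparr>"

datatype gob = G0 | G1 | G2
datatype gar = Gd | Gd0 | Gd1 | Gs0
datatype gcl = Gn0 | Gn1 | Gth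

definition gcomp :: "(gob, gar, gcl) computad" where
  "gcomp = \<lparr> cv = UNIV, ce = UNIV,
     esrc = (\<lambda>e. case e of Gd \<Rightarrow> G0 | Gd0 \<Rightarrow> G1 | Gd1 \<Rightarrow> G1 | Gs0 \<Rightarrow> G2),
     etgt = (\<lambda>e. case e of Gd \<Rightarrow> G1 | Gd0 \<Rightarrow> G2 | Gd1 \<Rightarrow> G2 | Gs0 \<Rightarrow> G1),
     ct = UNIV,
     csrc = (\<lambda>t. case t of Gn0 \<Rightarrow> (G1, [Gd0, Gs0]) | Gn1 \<Rightarrow> (G1, []) | Gth \<Rightarrow> (G0, [Gd, Gd1])),
     ctgt = (\<lambda>t. case t of Gn0 \<Rightarrow> (G1, []) | Gn1 \<Rightarrow> (G1, [Gd1, Gs0]) | Gth \<Rightarrow> (G0, [Gd, Gd0])) \<rparr>"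

end

theory Submission imports Defs begin

fun cnt :: "('x \<Rightarrow> int) \<Rightarrow> ('a,'x) tm \<Rightarrow> int" where
  "cnt w (At x) = w x"
| "cnt w (Iv x) = - w x"
| "cnt w (Idt f) = 0"
| "cnt w (Vt b a) = cnt w b + cnt w a"
| "cnt w (Ht b a) = cnt w b + cnt w a"

lemma cnt_eqv: "eqv P a b \<Longrightarrow> \<forall>(l,r)\<in>grel P. cnt w l = cnt w r \<Longrightarrow> cnt w a = cnt w b"
  by (induction rule: eqv.induct) auto

definition catok :: "('o,'a) cat1 \<Rightarrow> bool" where
  "catok C \<longleftrightarrow> (\<forall>f\<in>ar C. dom C f \<in> ob C \<and> cod C f \<in> ob C \<and>
      cmp C (idn C (cod C f)) f = f \<and> cmp C f (idn C (dom C f)) = f) \<and>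
    (\<forall>x\<in>ob C. idn C x \<in> ar C \<and> dom C (idn C x) = x \<and> cod C (idn C x) = x) \<and>
    (\<forall>f\<in>ar C. \<forall>g\<in>ar C. cod C f = dom C g \<longrightarrow> cmp C g f \<in> ar C \<and>
        dom C (cmp C g f) = dom C f \<and> cod C (cmp C g f) = cod C g) \<and>
    (\<forall>f g k. cmp C k (cmp C g f) = cmp C (cmp C k g) f)"

definition presok :: "('o,'a,'x) pres \<Rightarrow> bool" where
  "presok P \<longleftrightarrow> catok (base P) \<and> (\<forall>x\<in>gens P. gsrc P x \<in> ar (base P) \<and> gtgt P x \<in> ar (base P)
     \<and> dom (base P) (gsrc P x) = dom (base P) (gtgt P x) \<and> cod (base P) (gsrc P x) = cod (base P) (gtgt P x))"

inductive_cases wtAtE: "wt P (At x) f g"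
inductive_cases wtIvE: "wt P (Iv x) f g"
inductive_cases wtIdE: "wt P (Idt h) f g"
inductive_cases wtVE: "wt P (Vt b a) f g"
inductive_cases wtHE: "wt P (Ht b a) f g"

lemma wt_ok: "wt P a f g \<Longrightarrow> presok P \<Longrightarrow> f \<in> ar (base P) \<and> g \<in> ar (base P) \<and>
   dom (base P) f = dom (base P) g \<and> cod (base P) f = cod (base P) g"
proof (induction rule: wt.induct)
  case (wt_H a f g b h k)
  then have c: "\<forall>f\<in>ar (base P). \<forall>g\<in>ar (base P). cod (base P) f = dom (base P) g \<longrightarrow> cmp (base P) g f \<in> ar (base P) \<and>
        dom (base P) (cmp (base P) g f) = dom (base P) f \<and> cod (base P) (cmp (base P) g f) = cod (base P) g"
    unfolding presok_def catok_def by blast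
  from wt_H have i: "f \<in> ar (base P)" "g \<in> ar (base P)" "h \<in> ar (base P)" "k \<in> ar (base P)"
    "dom (base P) f = dom (base P) g" "cod (base P) f = cod (base P) g"
    "dom (base P) h = dom (base P) k" "cod (base P) h = cod (base P) k" "cod (base P) f = dom (base P) h" by auto
  show ?case using c[rule_format, OF i(1) i(3) i(9)] c[rule_format, OF i(2) i(4)] i by auto
qed (auto simp: presok_def)

lemma wt_fun: "wt P a f g \<Longrightarrow> wt P a f' g' \<Longrightarrow> f' = f \<and> g' = g"
proof (induction arbitrary: f' g' rule: wt.induct)
  case (wt_V a f g b h)
  from wt_V.prems obtain m where "wt P a f' m" "wt P b m g'" by (rule wtVE)
  with wt_V.IH show ?case by blast
next
  case (wt_H a f g b h k)
  from wt_H.prems obtain f1 g1 h1 k1 where "f' = cmp (base P) h1 f1" "g' = cmp (base P) k1 g1"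
    "wt P a f1 g1" "wt P b h1 k1" by (rule wtHE)
  with wt_H.IH show ?case by blast
qed (auto elim: wtAtE wtIvE wtIdE)

lemma catokD:
  assumes "catok C"
  shows "\<And>f. f \<in> ar C \<Longrightarrow> dom C f \<in> ob C \<and> cod C f \<in> ob C \<and>
      cmp C (idn C (cod C f)) f = f \<and> cmp C f (idn C (dom C f)) = f"
    and "\<And>x. x\<in>ob C \<Longrightarrow> idn C x \<in> ar C \<and> dom C (idn C x) = x \<and> cod C (idn C x) = x"
    and "\<And>f g. f\<in>ar C \<Longrightarrow> g\<in>ar C \<Longrightarrow> cod C f = dom C g \<Longrightarrow> cmp C g f \<in> ar C \<and>
        dom C (cmp C g f) = dom C f \<and> cod C (cmp C g f) = cod C g"
    and "\<And>f g k. cmp C k (cmp C g f) = cmp C (cmp C k g) f"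
  using assms unfolding catok_def by blast+

lemma eqv_wt: "eqv P a b \<Longrightarrow> presok P \<Longrightarrow> \<exists>f g. wt P a f g \<and> wt P b f g"
proof (induction rule: eqv.induct)
  case (e_refl a f g)
  then show ?case by blast
next
  case (e_sym a b)
  then show ?case by blast
next
  case (e_trans a b c)
  then show ?case using wt_fun by metis
next
  case (e_congV a a' b b' f g)
  from e_congV.hyps(3) obtain m where m: "wt P a f m" "wt P b m g" by (rule wtVE)
  from e_congV.IH e_congV.prems obtain f1 g1 f2 g2 where "wt P a f1 g1" "wt P a' f1 g1"
     "wt P b f2 g2" "wt P b' f2 g2" by blast
  with m wt_fun have "wt P a' f m" "wt P b' m g" by metis+
  then show ?case using e_congV.hyps(3) wt_V[of P a' f m b' g] by blast
next
  case (e_congH a a' b b' f g)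
  from e_congH.hyps(3) obtain f0 g0 h0 k0 where m: "f = cmp (base P) h0 f0" "g = cmp (base P) k0 g0"
    "wt P a f0 g0" "wt P b h0 k0" "cod (base P) f0 = dom (base P) h0" by (rule wtHE)
  from e_congH.IH e_congH.prems obtain f1 g1 f2 g2 where "wt P a f1 g1" "wt P a' f1 g1"
     "wt P b f2 g2" "wt P b' f2 g2" by blast
  with m wt_fun have "wt P a' f0 g0" "wt P b' h0 k0" by metis+
  then show ?case using e_congH.hyps(3) wt_H[of P a' f0 g0 b' h0 k0] m by auto
next
  case (e_rel a b f g)
  then show ?case by blast
next
  case (e_vassoc c b a f g)
  from e_vassoc.hyps obtain m where m: "wt P a f m" "wt P (Vt c b) m g"
    by (metis wtVE wt_V)
  from m(2) obtain n where "wt P b m n" "wt P c n g" by (rule wtVE)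
  then show ?case using m e_vassoc.hyps wt_V by metis
next
  case (e_vidl a f g)
  then have "g \<in> ar (base P)" using wt_ok by metis
  then show ?case using e_vidl wt_V[OF e_vidl.hyps wt_Id] by blast
next
  case (e_vidr a f g)
  then have "f \<in> ar (base P)" using wt_ok by metis
  then show ?case using e_vidr wt_V[OF wt_Id e_vidr.hyps] by blast
next
  case (e_hassoc c b a f g)
  let ?C = "base P"
  have C: "catok ?C" using e_hassoc.prems presok_def by blast
  from e_hassoc.hyps obtain f0 g0 h0 k0 where m: "f = cmp ?C h0 f0" "g = cmp ?C k0 g0"
    "wt P (Ht b a) f0 g0" "wt P c h0 k0" "cod ?C f0 = dom ?C h0" by (rule wtHE)
  from m(3) obtain f1 g1 h1 k1 where n: "f0 = cmp ?C h1 f1" "g0 = cmp ?C k1 g1"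
    "wt P a f1 g1" "wt P b h1 k1" "cod ?C f1 = dom ?C h1" by (rule wtHE)
  have ok: "f1 \<in> ar ?C" "g1 \<in> ar ?C" "h1 \<in> ar ?C" "k1 \<in> ar ?C" "h0 \<in> ar ?C" "k0 \<in> ar ?C"
    "dom ?C f1 = dom ?C g1" "cod ?C f1 = cod ?C g1" "dom ?C h1 = dom ?C k1" "cod ?C h1 = cod ?C k1"
    "dom ?C h0 = dom ?C k0" "cod ?C h0 = cod ?C k0"
    using wt_ok[OF n(3) e_hassoc.prems] wt_ok[OF n(4) e_hassoc.prems] wt_ok[OF m(4) e_hassoc.prems] by auto
  have c1: "cod ?C h1 = dom ?C h0" using m(5) n(1) catokD(3)[OF C ok(1) ok(3) n(5)] by simp
  have w1: "wt P (Ht c b) (cmp ?C h0 h1) (cmp ?C k0 k1)" using wt_H[OF n(4) m(4) c1] .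
  have c2: "cod ?C f1 = dom ?C (cmp ?C h0 h1)" using catokD(3)[OF C ok(3) ok(5) c1] n(5) by simp
  have w2: "wt P (Ht (Ht c b) a) (cmp ?C (cmp ?C h0 h1) f1) (cmp ?C (cmp ?C k0 k1) g1)"
    using wt_H[OF n(3) w1 c2] .
  have "wt P (Ht (Ht c b) a) f g" using w2 m n catokD(4)[OF C] by simp
  then show ?case using e_hassoc.hyps m by blast
next
  case (e_hidl a f g)
  let ?C = "base P"
  have C: "catok ?C" using e_hidl.prems presok_def by blast
  have ok: "f \<in> ar ?C" "g \<in> ar ?C" "cod ?C f = cod ?C g" using wt_ok[OF e_hidl.hyps e_hidl.prems] by auto
  have i: "idn ?C (cod ?C f) \<in> ar ?C" "dom ?C (idn ?C (cod ?C f)) = cod ?C f"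
    using catokD(1)[OF C ok(1)] catokD(2)[OF C] by auto
  have "wt P (Ht (Idt (idn ?C (cod ?C f))) a) (cmp ?C (idn ?C (cod ?C f)) f) (cmp ?C (idn ?C (cod ?C f)) g)"
    using wt_H[OF e_hidl.hyps wt_Id[OF i(1)]] i(2) by simp
  then have "wt P (Ht (Idt (idn ?C (cod ?C f))) a) f g"
    using catokD(1)[OF C ok(1)] catokD(1)[OF C ok(2)] ok(3) by simp
  then show ?case using e_hidl.hyps by blast
next
  case (e_hidr a f g)
  let ?C = "base P"
  have C: "catok ?C" using e_hidr.prems presok_def by blast
  have ok: "f \<in> ar ?C" "g \<in> ar ?C" "dom ?C f = dom ?C g" using wt_ok[OF e_hidr.hyps e_hidr.prems] by auto
  have i: "idn ?C (dom ?C f) \<in> ar ?C" "cod ?C (idn ?C (dom ?C f)) = dom ?C f"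
    using catokD(1)[OF C ok(1)] catokD(2)[OF C] by auto
  have "wt P (Ht a (Idt (idn ?C (dom ?C f)))) (cmp ?C f (idn ?C (dom ?C f))) (cmp ?C g (idn ?C (dom ?C f)))"
    using wt_H[OF wt_Id[OF i(1)] e_hidr.hyps] i(2) by simp
  then have "wt P (Ht a (Idt (idn ?C (dom ?C f)))) f g"
    using catokD(1)[OF C ok(1)] catokD(1)[OF C ok(2)] ok(3) by simp
  then show ?case using e_hidr.hyps by blast
next
  case (e_hidid g f h k)
  let ?C = "base P"
  have C: "catok ?C" using e_hidid.prems presok_def by blast
  from e_hidid.hyps obtain f0 g0 h0 k0 where m: "h = cmp ?C h0 f0" "k = cmp ?C k0 g0"
    "wt P (Idt f) f0 g0" "wt P (Idt g) h0 k0" "cod ?C f0 = dom ?C h0" by (rule wtHE)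
  from m(3) have a: "f0 = f" "g0 = f" "f \<in> ar ?C" by (auto elim: wtIdE)
  from m(4) have b: "h0 = g" "k0 = g" "g \<in> ar ?C" by (auto elim: wtIdE)
  have "cmp ?C g f \<in> ar ?C" using catokD(3)[OF C a(3) b(3)] m(5) a b by simp
  then show ?case using e_hidid.hyps m a b wt_Id by metis
next
  case (e_interchange d c b a f g)
  let ?C = "base P"
  have C: "catok ?C" using e_interchange.prems presok_def by blast
  from e_interchange.hyps obtain f0 g0 h0 k0 where m: "f = cmp ?C h0 f0" "g = cmp ?C k0 g0"
    "wt P (Vt b a) f0 g0" "wt P (Vt d c) h0 k0" "cod ?C f0 = dom ?C h0" by (rule wtHE)
  from m(3) obtain p where p: "wt P a f0 p" "wt P b p g0" by (rule wtVE)
  from m(4) obtain q where q: "wt P c h0 q" "wt P d q k0" by (rule wtVE)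
  have "cod ?C p = cod ?C f0" "dom ?C q = dom ?C h0"
    using wt_ok[OF p(1) e_interchange.prems] wt_ok[OF q(1) e_interchange.prems] by auto
  then have c2: "cod ?C p = dom ?C q" using m(5) by simp
  have "wt P (Vt (Ht d b) (Ht c a)) f g"
    using wt_V[OF wt_H[OF p(1) q(1) m(5)] wt_H[OF p(2) q(2) c2]] m by simp
  then show ?case using e_interchange.hyps by blast
next
  case (e_invl x)
  have "gsrc P x \<in> ar (base P)" using e_invl.prems e_invl.hyps(2) unfolding presok_def by auto
  then have "wt P (Idt (gsrc P x)) (gsrc P x) (gsrc P x)" by (rule wt_Id)
  moreover have "wt P (Vt (Iv x) (At x)) (gsrc P x) (gsrc P x)"
    by (rule wt_V[OF wt_At[OF e_invl.hyps(2)] wt_Iv[OF e_invl.hyps]])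
  ultimately show ?case by blast
next
  case (e_invr x)
  have "gtgt P x \<in> ar (base P)" using e_invr.prems e_invr.hyps(2) unfolding presok_def by auto
  then have "wt P (Idt (gtgt P x)) (gtgt P x) (gtgt P x)" by (rule wt_Id)
  moreover have "wt P (Vt (At x) (Iv x)) (gtgt P x) (gtgt P x)"
    by (rule wt_V[OF wt_Iv[OF e_invr.hyps] wt_At[OF e_invr.hyps(2)]])
  ultimately show ?case by blast
qed

lemma cls_mem_wt: assumes "presok P" "wt P a f g" "x \<in> cls P a" shows "wt P x f g"
proof -
  have "eqv P a x" using assms(3) unfolding cls_def by simp
  then obtain f1 g1 where "wt P a f1 g1" "wt P x f1 g1" using eqv_wt assms(1) by blast
  then show ?thesis using wt_fun[OF assms(2)] by blast
qed

lemma self_in_cls: "wt P a f g \<Longrightarrow> a \<in> cls P a"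
  using e_refl[of P a f g] unfolding cls_def by simp

lemma s2_gen2: "s2 (gen2 P) = (\<lambda>A. SOME f. \<exists>a\<in>A. \<exists>g. wt P a f g)"
  unfolding gen2_def by simp
lemma t2_gen2: "t2 (gen2 P) = (\<lambda>A. SOME g. \<exists>a\<in>A. \<exists>f. wt P a f g)"
  unfolding gen2_def by simp

lemma s2t2_cls: assumes "presok P" "wt P a f g"
  shows "s2 (gen2 P) (cls P a) = f \<and> t2 (gen2 P) (cls P a) = g"
proof -
  have m: "a \<in> cls P a" using self_in_cls[OF assms(2)] .
  have "(SOME f'. \<exists>a'\<in>cls P a. \<exists>g'. wt P a' f' g') = f"
  proof (rule some_equality)
    show "\<exists>a'\<in>cls P a. \<exists>g'. wt P a' f g'" using m assms(2) by blast
  next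
    fix f' assume "\<exists>a'\<in>cls P a. \<exists>g'. wt P a' f' g'"
    then obtain a' g' where o: "a' \<in> cls P a" "wt P a' f' g'" by blast
    have w: "wt P a' f g" using o(1) by (rule cls_mem_wt[OF assms])
    show "f' = f" using wt_fun[OF w o(2)] by simp
  qed
  moreover have "(SOME g'. \<exists>a'\<in>cls P a. \<exists>f'. wt P a' f' g') = g"
  proof (rule some_equality)
    show "\<exists>a'\<in>cls P a. \<exists>f'. wt P a' f' g" using m assms(2) by blast
  next
    fix g' assume "\<exists>a'\<in>cls P a. \<exists>f'. wt P a' f' g'"
    then obtain a' f' where o: "a' \<in> cls P a" "wt P a' f' g'" by blast
    have w: "wt P a' f g" using o(1) by (rule cls_mem_wt[OF assms])
    show "g' = g" using wt_fun[OF w o(2)] by simp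
  qed
  ultimately show ?thesis unfolding s2_gen2 t2_gen2 by (simp only:)
qed

lemma cls_eq_eqv: assumes "cls P a = cls P b" "wt P b f g" shows "eqv P a b"
proof -
  have "b \<in> cls P a" using self_in_cls[OF assms(2)] assms(1) by simp
  then show ?thesis unfolding cls_def by simp
qed

lemma cl_gen2: "cl (gen2 P) = {cls P a | a f g. wt P a f g}"
  by (simp add: gen2_def)

lemma cnt_nonneg: "wt P a f g \<Longrightarrow> \<not> ginv P \<Longrightarrow>
   0 \<le> cnt (\<lambda>_. 1) a \<and> (cnt (\<lambda>_. 1) a = 0 \<longrightarrow> f = g)"
  by (induction rule: wt.induct) auto

lemma chain_app: "chain h x (fs @ gs) = (chain h x fs \<and> chain h (pend h x fs) gs)"
  by (induction fs arbitrary: x) auto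

lemma pend_app: "pend h x (fs @ gs) = pend h (pend h x fs) gs"
  by (induction fs arbitrary: x) auto

lemma pend_cv: "is_computad h \<Longrightarrow> x \<in> cv h \<Longrightarrow> chain h x fs \<Longrightarrow> pend h x fs \<in> cv h"
  by (induction fs arbitrary: x) (auto simp: is_computad_def)

lemma pc_simps:
  "ob (pathcat h) = cv h"
  "p \<in> ar (pathcat h) \<longleftrightarrow> fst p \<in> cv h \<and> chain h (fst p) (snd p)"
  "dom (pathcat h) p = fst p"
  "cod (pathcat h) p = pend h (fst p) (snd p)"
  "idn (pathcat h) x = (x, [])"
  "cmp (pathcat h) q p = (fst p, snd p @ snd q)"
  unfolding pathcat_def by (auto split: prod.splits)

lemma catok_pathcat: assumes "is_computad h" shows "catok (pathcat h)"
  unfolding catok_def pc_simps using pend_cv[OF assms]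
  by (auto simp: chain_app pend_app pc_simps)

definition PF :: "('v,'e,'t) computad \<Rightarrow> ('v, 'v \<times> 'e list, 't) pres" where
  "PF h = \<lparr> base = pathcat h, gens = ct h, gsrc = csrc h, gtgt = ctgt h, ginv = False, grel = {} \<rparr>"

lemma F2_PF: "F2 h = gen2 (PF h)"
  by (simp add: F2_def PF_def)

lemma presok_PF: "is_computad h \<Longrightarrow> presok (PF h)"
  unfolding presok_def PF_def using catok_pathcat
  by (auto simp: is_computad_def)

lemma comp_g: "is_computad gcomp"
  unfolding is_computad_def pc_simps
  by (auto simp: gcomp_def split: gcl.splits gar.splits)

lemma gen2_simps:
  "ob (gen2 P) = ob (base P)" "ar (gen2 P) = ar (base P)" "dom (gen2 P) = dom (base P)"
  "cod (gen2 P) = cod (base P)" "idn (gen2 P) = idn (base P)" "cmp (gen2 P) = cmp (base P)"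
  "id2 (gen2 P) = (\<lambda>f. cls P (Idt f))"
  "vc (gen2 P) = (\<lambda>B A. cls P (Vt (SOME b. b \<in> B) (SOME a. a \<in> A)))"
  "hc (gen2 P) = (\<lambda>B A. cls P (Ht (SOME b. b \<in> B) (SOME a. a \<in> A)))"
  unfolding gen2_def by simp_all

lemma M2_simps:
  "ar (M2 C) = ar C" "s2 (M2 C) = fst" "t2 (M2 C) = snd"
  "cl (M2 C) = {(s2 C c, t2 C c) | c. c \<in> cl C}"
  unfolding M2_def by simp_all

lemma wt_H': "wt P a f g \<Longrightarrow> wt P b h k \<Longrightarrow> cod (base P) f = dom (base P) h \<Longrightarrow>
   F = cmp (base P) h f \<Longrightarrow> G = cmp (base P) k g \<Longrightarrow> wt P (Ht b a) F G"
  using wt_H by simp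

lemma wt_At': "x \<in> gens P \<Longrightarrow> f = gsrc P x \<Longrightarrow> g = gtgt P x \<Longrightarrow> wt P (At x) f g"
  using wt_At by simp

definition "tS0 = Ht (Idt (G2,[Gs0])) (At Gth)"
definition "tN0 = Ht (At Gn0) (Idt (G0,[Gd]))"
definition "tN1 = Ht (At Gn1) (Idt (G0,[Gd]))"

lemma wt_tS0: "wt (PF gcomp) tS0 (G0,[Gd,Gd1,Gs0]) (G0,[Gd,Gd0,Gs0])"
  unfolding tS0_def
  apply (rule wt_H'[OF wt_At' wt_Id])
  by (auto simp add: PF_def gcomp_def pc_simps)

lemma wt_tN0: "wt (PF gcomp) tN0 (G0,[Gd,Gd0,Gs0]) (G0,[Gd])"
  unfolding tN0_def
  apply (rule wt_H'[OF wt_Id wt_At'])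
  by (auto simp add: PF_def gcomp_def pc_simps)

lemma wt_tN1: "wt (PF gcomp) tN1 (G0,[Gd]) (G0,[Gd,Gd1,Gs0])"
  unfolding tN1_def
  apply (rule wt_H'[OF wt_Id wt_At'])
  by (auto simp add: PF_def gcomp_def pc_simps)

lemma cnt_terms: "cnt (\<lambda>_. 1) tS0 = 1" "cnt (\<lambda>_. 1) tN0 = 1" "cnt (\<lambda>_. 1) tN1 = 1"
  by (simp_all add: tS0_def tN0_def tN1_def)

lemma presok_g: "presok (PF gcomp)" using presok_PF[OF comp_g] .

lemma wt_comp: "wt (PF gcomp) (Vt tN1 (Vt tN0 tS0)) (G0,[Gd,Gd1,Gs0]) (G0,[Gd,Gd1,Gs0])"
  by (rule wt_V[OF wt_V[OF wt_tS0 wt_tN0] wt_tN1])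

lemma s_ar: "(G0,[Gd,Gd1,Gs0]) \<in> ar (base (PF gcomp))"
  by (simp add: PF_def gcomp_def pc_simps)
lemma d_ar: "(G0,[Gd]) \<in> ar (base (PF gcomp))"
  by (simp add: PF_def gcomp_def pc_simps)

lemma notthin_F2: "\<not> loc_thin (F2 gcomp)"
proof
  assume lt: "loc_thin (F2 gcomp)"
  let ?P = "PF gcomp" and ?s = "(G0,[Gd,Gd1,Gs0]) :: gob \<times> gar list"
  let ?X = "cls ?P (Vt tN1 (Vt tN0 tS0))" and ?Y = "cls ?P (Idt ?s)"
  have wY: "wt ?P (Idt ?s) ?s ?s" using wt_Id[OF s_ar] .
  have i1: "?X \<in> cl (F2 gcomp)" unfolding F2_PF cl_gen2
    using wt_comp by blast
  have i2: "?Y \<in> cl (F2 gcomp)" unfolding F2_PF cl_gen2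
    using wY by blast
  have "s2 (F2 gcomp) ?X = s2 (F2 gcomp) ?Y \<and> t2 (F2 gcomp) ?X = t2 (F2 gcomp) ?Y"
    unfolding F2_PF using s2t2_cls[OF presok_g wt_comp] s2t2_cls[OF presok_g wY] by simp
  then have "?X = ?Y" using lt[unfolded loc_thin_def, rule_format, OF i1 i2] by simp
  then have e: "eqv ?P (Vt tN1 (Vt tN0 tS0)) (Idt ?s)" using cls_eq_eqv[OF _ wY] by simp
  have "cnt (\<lambda>_. 1) (Vt tN1 (Vt tN0 tS0)) = cnt (\<lambda>_. 1) (Idt ?s)"
    using cnt_eqv[OF e, of "\<lambda>_. 1"] by (simp add: PF_def)
  then show False using cnt_terms by simp
qed

lemma cl_g_ar: "c \<in> cl (F2 gcomp) \<Longrightarrow> s2 (F2 gcomp) c \<in> ar (F2 gcomp) \<and> t2 (F2 gcomp) c \<in> ar (F2 gcomp)"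
proof -
  assume "c \<in> cl (F2 gcomp)"
  then obtain a f g where c: "c = cls (PF gcomp) a" "wt (PF gcomp) a f g" unfolding F2_PF cl_gen2 by blast
  show ?thesis unfolding F2_PF gen2_simps c(1) using s2t2_cls[OF presok_g c(2)] wt_ok[OF c(2) presok_g] by simp
qed

lemma iso_thin:
  assumes "iso2 C D" "loc_thin C" "\<And>c. c \<in> cl C \<Longrightarrow> s2 C c \<in> ar C \<and> t2 C c \<in> ar C"
  shows "loc_thin D"
  unfolding loc_thin_def
proof (intro ballI impI)
  fix X Y assume XY: "X \<in> cl D" "Y \<in> cl D" "s2 D X = s2 D Y \<and> t2 D X = t2 D Y"
  from assms(1) obtain F0 F1 Fc where
    b1: "bij_betw F1 (ar C) (ar D)" and b2: "bij_betw Fc (cl C) (cl D)" and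
    st: "\<forall>a\<in>cl C. s2 D (Fc a) = F1 (s2 C a) \<and> t2 D (Fc a) = F1 (t2 C a)"
    unfolding iso2_def by blast
  from b2 XY obtain x y where xy: "x \<in> cl C" "y \<in> cl C" "X = Fc x" "Y = Fc y"
    unfolding bij_betw_def by blast
  have "F1 (s2 C x) = F1 (s2 C y)" "F1 (t2 C x) = F1 (t2 C y)" using st xy XY(3) by auto
  then have "s2 C x = s2 C y" "t2 C x = t2 C y"
    using b1 assms(3)[OF xy(1)] assms(3)[OF xy(2)] unfolding bij_betw_def inj_on_def by blast+
  then have "x = y" using assms(2) xy unfolding loc_thin_def by blast
  then show "X = Y" using xy by simp
qed

lemma cls_in: "wt P a f g \<Longrightarrow> cls P a \<in> cl (gen2 P)"
  unfolding cl_gen2 by blast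

lemma M2_cl_in: "c \<in> cl C \<Longrightarrow> (s2 C c, t2 C c) \<in> cl (M2 C)"
  unfolding M2_simps by blast

lemma M2_thin: "loc_thin (M2 C)"
  unfolding loc_thin_def M2_simps by (auto simp: prod_eq_iff)

lemma not_iso:
  assumes hc: "is_computad h" and iso: "iso2 (M2 (F2 gcomp)) (F2 h)"
  shows False
proof -
  let ?d = "(G0,[Gd]) :: gob \<times> gar list" and ?s = "(G0,[Gd,Gd1,Gs0]) :: gob \<times> gar list"
  let ?M = "M2 (F2 gcomp)" and ?Q = "PF h"
  have pq: "presok ?Q" using presok_PF[OF hc] .
  from iso obtain F0 F1 Fc where
    b1: "bij_betw F1 (ar ?M) (ar (F2 h))" and b2: "bij_betw Fc (cl ?M) (cl (F2 h))" and
    st: "\<forall>a\<in>cl ?M. s2 (F2 h) (Fc a) = F1 (s2 ?M a) \<and> t2 (F2 h) (Fc a) = F1 (t2 ?M a)"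
    unfolding iso2_def by blast
  have thin: "loc_thin (F2 h)"
    by (rule iso_thin[OF iso M2_thin]) (auto simp: M2_simps dest: cl_g_ar)
  have ws: "wt (PF gcomp) (Vt tN0 tS0) ?s ?d" by (rule wt_V[OF wt_tS0 wt_tN0])
  have c1: "(?d, ?s) \<in> cl ?M"
    using M2_cl_in[OF cls_in[OF wt_tN1]] s2t2_cls[OF presok_g wt_tN1] by (simp add: F2_PF)
  have c2: "(?s, ?d) \<in> cl ?M"
    using M2_cl_in[OF cls_in[OF ws]] s2t2_cls[OF presok_g ws] by (simp add: F2_PF)
  have ds: "?d \<in> ar ?M" "?s \<in> ar ?M" unfolding M2_simps F2_PF gen2_simps using d_ar s_ar by auto
  have "Fc (?d, ?s) \<in> cl (F2 h)" using b2 c1 by (rule bij_betw_apply)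
  then obtain a f g where a: "Fc (?d, ?s) = cls ?Q a" "wt ?Q a f g" unfolding F2_PF cl_gen2 by blast
  have "s2 (F2 h) (Fc (?d, ?s)) = F1 ?d \<and> t2 (F2 h) (Fc (?d, ?s)) = F1 ?s"
    using st[rule_format, OF c1] by (simp add: M2_simps)
  then have "f = F1 ?d" "g = F1 ?s" using s2t2_cls[OF pq a(2)] a(1) unfolding F2_PF by auto
  then have wa: "wt ?Q a (F1 ?d) (F1 ?s)" using a(2) by simp
  have "Fc (?s, ?d) \<in> cl (F2 h)" using b2 c2 by (rule bij_betw_apply)
  then obtain b f' g' where b: "Fc (?s, ?d) = cls ?Q b" "wt ?Q b f' g'" unfolding F2_PF cl_gen2 by blast
  have "s2 (F2 h) (Fc (?s, ?d)) = F1 ?s \<and> t2 (F2 h) (Fc (?s, ?d)) = F1 ?d"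
    using st[rule_format, OF c2] by (simp add: M2_simps)
  then have "f' = F1 ?s" "g' = F1 ?d" using s2t2_cls[OF pq b(2)] b(1) unfolding F2_PF by auto
  then have wb: "wt ?Q b (F1 ?s) (F1 ?d)" using b(2) by simp
  have wv: "wt ?Q (Vt b a) (F1 ?d) (F1 ?d)" by (rule wt_V[OF wa wb])
  have "F1 ?d \<in> ar (base ?Q)" using wt_ok[OF wa pq] by simp
  then have wi: "wt ?Q (Idt (F1 ?d)) (F1 ?d) (F1 ?d)" by (rule wt_Id)
  have i1: "cls ?Q (Vt b a) \<in> cl (F2 h)" unfolding F2_PF by (rule cls_in[OF wv])
  have i2: "cls ?Q (Idt (F1 ?d)) \<in> cl (F2 h)" unfolding F2_PF by (rule cls_in[OF wi])
  have "s2 (F2 h) (cls ?Q (Vt b a)) = s2 (F2 h) (cls ?Q (Idt (F1 ?d))) \<and>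
        t2 (F2 h) (cls ?Q (Vt b a)) = t2 (F2 h) (cls ?Q (Idt (F1 ?d)))"
    unfolding F2_PF using s2t2_cls[OF pq wv] s2t2_cls[OF pq wi] by simp
  then have "cls ?Q (Vt b a) = cls ?Q (Idt (F1 ?d))"
    using thin[unfolded loc_thin_def, rule_format, OF i1 i2] by simp
  then have e: "eqv ?Q (Vt b a) (Idt (F1 ?d))" using cls_eq_eqv[OF _ wi] by simp
  have "cnt (\<lambda>_. 1) (Vt b a) = cnt (\<lambda>_. 1) (Idt (F1 ?d))"
    using cnt_eqv[OF e, of "\<lambda>_. 1"] by (simp add: PF_def)
  moreover have "\<not> ginv ?Q" by (simp add: PF_def)
  ultimately have "F1 ?d = F1 ?s" using cnt_nonneg[OF wa] cnt_nonneg[OF wb] by auto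
  moreover have "?d \<noteq> ?s" by simp
  ultimately show False using b1 ds unfolding bij_betw_def inj_on_def by blast
qed

definition LP :: "('o,'a,'x) pres \<Rightarrow> ('o,'a,('a,'x) tm set) pres" where
  "LP P = (let C = gen2 P in \<lparr> base = cat1.truncate C, gens = cl C, gsrc = s2 C, gtgt = t2 C, ginv = True,
     grel = {(Vt (At b) (At a), At (vc C b a)) | a b. a \<in> cl C \<and> b \<in> cl C \<and> t2 C a = s2 C b}
          \<union> {(Ht (At b) (At a), At (hc C b a)) | a b. a \<in> cl C \<and> b \<in> cl C \<and>
                 cod C (s2 C a) = dom C (s2 C b)}
          \<union> {(At (id2 C f), Idt f) | f. f \<in> ar C} \<rparr>)"

lemma L2_LP: "L2 (gen2 P) = gen2 (LP P)"
  unfolding L2_def LP_def Let_def by (rule refl)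

lemma LP_simps: "gens (LP P) = cl (gen2 P)" "gsrc (LP P) = s2 (gen2 P)" "gtgt (LP P) = t2 (gen2 P)"
  "ar (base (LP P)) = ar (base P)"
  unfolding LP_def Let_def by (simp_all add: cat1.truncate_def gen2_simps)

lemma catok_LP: "catok (base (LP P)) = catok (base P)"
  unfolding LP_def Let_def catok_def by (simp add: cat1.truncate_def gen2_simps)

lemma presok_LP: assumes "presok P" shows "presok (LP P)"
proof -
  have "\<And>x. x \<in> cl (gen2 P) \<Longrightarrow> s2 (gen2 P) x \<in> ar (base P) \<and> t2 (gen2 P) x \<in> ar (base P) \<and>
     dom (base P) (s2 (gen2 P) x) = dom (base P) (t2 (gen2 P) x) \<and>
     cod (base P) (s2 (gen2 P) x) = cod (base P) (t2 (gen2 P) x)"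
  proof -
    fix x assume "x \<in> cl (gen2 P)"
    then obtain a f g where c: "x = cls P a" "wt P a f g" unfolding cl_gen2 by blast
    show "?thesis x" using s2t2_cls[OF assms c(2)] wt_ok[OF c(2) assms] c(1) by simp
  qed
  moreover have "dom (base (LP P)) = dom (base P)" "cod (base (LP P)) = cod (base P)"
    unfolding LP_def Let_def by (simp_all add: cat1.truncate_def gen2_simps)
  ultimately show ?thesis using assms unfolding presok_def catok_LP LP_simps by simp
qed

definition wP :: "('a,'x) tm set \<Rightarrow> int" where
  "wP A = cnt (\<lambda>_. 1) (SOME a. a \<in> A)"

lemma some_cls: assumes "presok P" "grel P = {}" "wt P a f g"
  shows "(SOME x. x \<in> cls P a) \<in> cls P a" "wt P (SOME x. x \<in> cls P a) f g"
    "cnt (\<lambda>_. 1) (SOME x. x \<in> cls P a) = cnt (\<lambda>_. 1) a"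
proof -
  show m: "(SOME x. x \<in> cls P a) \<in> cls P a" using self_in_cls[OF assms(3)] by (rule someI)
  show "wt P (SOME x. x \<in> cls P a) f g" using m by (rule cls_mem_wt[OF assms(1,3)])
  have "eqv P a (SOME x. x \<in> cls P a)" using m unfolding cls_def by simp
  then show "cnt (\<lambda>_. 1) (SOME x. x \<in> cls P a) = cnt (\<lambda>_. 1) a"
    using cnt_eqv[of P a _ "\<lambda>_. 1"] assms(2) by simp
qed

lemma w_cls: "presok P \<Longrightarrow> grel P = {} \<Longrightarrow> wt P a f g \<Longrightarrow> wP (cls P a) = cnt (\<lambda>_. 1) a"
  unfolding wP_def using some_cls(3) .

lemma vc_w: assumes P: "presok P" "grel P = {}" and AB: "A \<in> cl (gen2 P)" "B \<in> cl (gen2 P)"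
  "t2 (gen2 P) A = s2 (gen2 P) B"
  shows "wP (vc (gen2 P) B A) = wP B + wP A"
proof -
  obtain a f g where a: "A = cls P a" "wt P a f g" using AB(1) unfolding cl_gen2 by blast
  obtain b f' g' where b: "B = cls P b" "wt P b f' g'" using AB(2) unfolding cl_gen2 by blast
  have "g = f'" using AB(3) s2t2_cls[OF P(1) a(2)] s2t2_cls[OF P(1) b(2)] a(1) b(1) by simp
  then have wb: "wt P (SOME x. x \<in> cls P b) g g'" using some_cls(2)[OF P b(2)] by simp
  have w: "wt P (Vt (SOME x. x \<in> B) (SOME x. x \<in> A)) f g'"
    using wt_V[OF some_cls(2)[OF P a(2)] wb] a(1) b(1) by simp
  have "wP (vc (gen2 P) B A) = cnt (\<lambda>_. 1) (Vt (SOME x. x \<in> B) (SOME x. x \<in> A))"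
    unfolding gen2_simps using w_cls[OF P w] by simp
  also have "\<dots> = wP B + wP A" unfolding wP_def by simp
  finally show ?thesis .
qed

lemma hc_w: assumes P: "presok P" "grel P = {}" and AB: "A \<in> cl (gen2 P)" "B \<in> cl (gen2 P)"
  "cod (gen2 P) (s2 (gen2 P) A) = dom (gen2 P) (s2 (gen2 P) B)"
  shows "wP (hc (gen2 P) B A) = wP B + wP A"
proof -
  obtain a f g where a: "A = cls P a" "wt P a f g" using AB(1) unfolding cl_gen2 by blast
  obtain b f' g' where b: "B = cls P b" "wt P b f' g'" using AB(2) unfolding cl_gen2 by blast
  have c: "cod (base P) f = dom (base P) f'" using AB(3) s2t2_cls[OF P(1) a(2)] s2t2_cls[OF P(1) b(2)] a(1) b(1)
    by (simp add: gen2_simps)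
  have w: "wt P (Ht (SOME x. x \<in> B) (SOME x. x \<in> A)) (cmp (base P) f' f) (cmp (base P) g' g)"
    using wt_H[OF some_cls(2)[OF P a(2)] some_cls(2)[OF P b(2)] c] a(1) b(1) by simp
  have "wP (hc (gen2 P) B A) = cnt (\<lambda>_. 1) (Ht (SOME x. x \<in> B) (SOME x. x \<in> A))"
    unfolding gen2_simps using w_cls[OF P w] by simp
  also have "\<dots> = wP B + wP A" unfolding wP_def by simp
  finally show ?thesis .
qed

lemma id2_w: assumes P: "presok P" "grel P = {}" and f: "f \<in> ar (gen2 P)"
  shows "wP (id2 (gen2 P) f) = 0"
proof -
  have w: "wt P (Idt f) f f" using f by (simp add: gen2_simps wt_Id)
  show ?thesis unfolding gen2_simps using w_cls[OF P w] by simp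
qed

lemma rel_LP: assumes P: "presok P" "grel P = {}"
  shows "\<forall>(l, r)\<in>grel (LP P). cnt wP l = cnt wP r"
  unfolding LP_def Let_def using vc_w[OF P] hc_w[OF P] id2_w[OF P] by auto

lemma notthin_L2: "\<not> loc_thin (L2 (F2 gcomp))"
proof
  assume lt: "loc_thin (L2 (F2 gcomp))"
  let ?P = "PF gcomp" and ?s = "(G0,[Gd,Gd1,Gs0]) :: gob \<times> gar list"
  let ?Q = "LP ?P"
  have gP: "grel ?P = {}" by (simp add: PF_def)
  have pQ: "presok ?Q" using presok_LP[OF presok_g] .
  let ?A = "cls ?P (Vt tN1 (Vt tN0 tS0))"
  have Ain: "?A \<in> gens ?Q" unfolding LP_simps by (rule cls_in[OF wt_comp])
  have wA: "wt ?Q (At ?A) ?s ?s"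
    using wt_At[OF Ain] s2t2_cls[OF presok_g wt_comp] unfolding LP_simps by simp
  have wY: "wt ?Q (Idt ?s) ?s ?s" using wt_Id[of ?s ?Q] s_ar unfolding LP_simps by simp
  let ?X = "cls ?Q (At ?A)" and ?Y = "cls ?Q (Idt ?s)"
  have i1: "?X \<in> cl (L2 (F2 gcomp))" unfolding F2_PF L2_LP by (rule cls_in[OF wA])
  have i2: "?Y \<in> cl (L2 (F2 gcomp))" unfolding F2_PF L2_LP by (rule cls_in[OF wY])
  have "s2 (L2 (F2 gcomp)) ?X = s2 (L2 (F2 gcomp)) ?Y \<and> t2 (L2 (F2 gcomp)) ?X = t2 (L2 (F2 gcomp)) ?Y"
    unfolding F2_PF L2_LP using s2t2_cls[OF pQ wA] s2t2_cls[OF pQ wY] by simp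
  then have "?X = ?Y" using lt[unfolded loc_thin_def, rule_format, OF i1 i2] by simp
  then have e: "eqv ?Q (At ?A) (Idt ?s)" using cls_eq_eqv[OF _ wY] by simp
  have "cnt wP (At ?A) = cnt wP (Idt ?s)"
    using cnt_eqv[OF e rel_LP[OF presok_g gP]] by simp
  moreover have "wP ?A = 3" using w_cls[OF presok_g gP wt_comp] cnt_terms by simp
  ultimately show False by simp
qed

theorem mainTheorem17:
  shows "\<not> (\<exists>h :: ('v,'e,'t) computad. is_computad h \<and> iso2 (M2 (F2 gcomp)) (F2 h))
         \<and> \<not> loc_thin (F2 gcomp) \<and> \<not> loc_thin (L2 (F2 gcomp))"
  using not_iso notthin_F2 notthin_L2 by blast

end
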